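(* For a positive integer $k$, every graph $H$ with $|E(H)|\le\frac{1}{2}k(k+1)$ has an almost $k$-coloring.
   Context: A (proper) coloring $c$ of a graph $H$ is an almost $k$-coloring if either $c$ is a $k$-coloring of $H$ (uses at most $k$ colors), or $c$ is a $(k+1)$-coloring of $H$ in which at least one color class is a singleton set. *)

theory Defs
  imports Main
begin

definition graph :: "'a set \<Rightarrow> 'a set set \<Rightarrow> bool" where
  "graph V E \<longleftrightarrow> finite V \<and> (\<forall>e\<in>E. e \<subseteq> V \<and> card e = 2)"

definition proper_coloring :: "'a set \<Rightarrow> 'a set set \<Rightarrow> ('a \<Rightarrow> nat) \<Rightarrow> bool" where
  "proper_coloring V E c \<longleftrightarrow> (\<forall>u\<in>V. \<forall>v\<in>V. {u, v} \<in> E \<longrightarrow> c u \<noteq> c v)"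

definition k_coloring :: "nat \<Rightarrow> 'a set \<Rightarrow> 'a set set \<Rightarrow> ('a \<Rightarrow> nat) \<Rightarrow> bool" where
  "k_coloring k V E c \<longleftrightarrow> proper_coloring V E c \<and> card (c ` V) \<le> k"

definition color_class :: "'a set \<Rightarrow> ('a \<Rightarrow> nat) \<Rightarrow> nat \<Rightarrow> 'a set" where
  "color_class V c x = {v \<in> V. c v = x}"

definition almost_k_coloring :: "nat \<Rightarrow> 'a set \<Rightarrow> 'a set set \<Rightarrow> ('a \<Rightarrow> nat) \<Rightarrow> bool" where
  "almost_k_coloring k V E c \<longleftrightarrow>
     k_coloring k V E c \<or>
     (k_coloring (k + 1) V E c \<and> (\<exists>x\<in>c ` V. card (color_class V c x) = 1))"

end

theory Submission
  imports Defs
begin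

lemma other_elem:
  assumes "finite A" "card A \<ge> 2" "x \<in> A"
  shows "\<exists>y\<in>A. y \<noteq> x"
proof (rule ccontr)
  assume "\<not> ?thesis"
  then have "A \<subseteq> {x}" by blast
  then have "card A \<le> 1" using card_mono[of "{x}" A] by simp
  then show False using assms(2) by simp
qed

lemma merge_colors:
  assumes fin: "finite V" and pc: "proper_coloring V E c"
    and xV: "x \<in> c ` V" and yV: "y \<in> c ` V" and xy: "x \<noteq> y"
    and noedge: "\<not> (\<exists>u\<in>V. \<exists>v\<in>V. {u,v} \<in> E \<and> c u = x \<and> c v = y)"
  shows "\<exists>c'. proper_coloring V E c' \<and> card (c' ` V) < card (c ` V)"
proof -
  define c' where "c' = (\<lambda>v. if c v = y then x else c v)"
  have "proper_coloring V E c'"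
    unfolding proper_coloring_def
  proof (intro ballI impI)
    fix u v assume uv: "u \<in> V" "v \<in> V" "{u, v} \<in> E"
    have e2: "{v, u} \<in> E" using uv(3) by (simp add: insert_commute)
    have "c u \<noteq> c v" using pc uv unfolding proper_coloring_def by blast
    then show "c' u \<noteq> c' v" using noedge uv e2 unfolding c'_def by (auto split: if_splits)
  qed
  moreover have "c' ` V \<subseteq> c ` V - {y}" using xV xy unfolding c'_def by auto
  then have "card (c' ` V) \<le> card (c ` V - {y})" using fin by (intro card_mono) auto
  moreover have "card (c ` V - {y}) < card (c ` V)" using fin yV by (intro card_Diff1_less) auto
  ultimately show ?thesis by force
qed

theorem lemma3:
  fixes k :: nat and V :: "'a set" and E :: "'a set set"
  assumes "k > 0"
    and "graph V E"
    and "2 * card E \<le> k * (k + 1)"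
  shows "\<exists>c. almost_k_coloring k V E c"
proof -
  have fin: "finite V" and Esub: "\<And>e. e \<in> E \<Longrightarrow> e \<subseteq> V \<and> card e = 2"
    using assms(2) unfolding graph_def by auto
  have finE: "finite E"
  proof -
    have "E \<subseteq> Pow V" using Esub by auto
    then show ?thesis using fin by (meson finite_Pow_iff finite_subset)
  qed
  obtain f :: "'a \<Rightarrow> nat" and m where "f ` V = {i. i < m}" "inj_on f V"
    using finite_imp_inj_to_nat_seg[OF fin] by blast
  then have pf: "proper_coloring V E f"
    unfolding proper_coloring_def
    by (metis Esub card_2_iff doubleton_eq_iff inj_on_eq_iff)
  define n where "n = (LEAST n. \<exists>c. proper_coloring V E c \<and> card (c ` V) = n)"
  have nex: "\<exists>c. proper_coloring V E c \<and> card (c ` V) = n"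
    unfolding n_def by (rule LeastI[where k="card (f ` V)"]) (use pf in blast)
  have nmin: "\<And>c. proper_coloring V E c \<Longrightarrow> n \<le> card (c ` V)"
    unfolding n_def by (rule Least_le) blast
  define P where "P = (\<lambda>(c, x). proper_coloring V E c \<and> card (c ` V) = n \<and> x \<in> c ` V)"
  show ?thesis
  proof (cases "n \<le> k")
    case True
    then show ?thesis using nex unfolding almost_k_coloring_def k_coloring_def by auto
  next
    case False
    then have Vne: "V \<noteq> {}" using nex by auto
    obtain c0 where c0: "proper_coloring V E c0" "card (c0 ` V) = n" using nex by blast
    then obtain x0 where "x0 \<in> c0 ` V" using Vne by auto
    then have "P (c0, x0)" using c0 unfolding P_def by auto
    then obtain cx where Pcx: "P cx" and cxmin: "\<And>y. P y \<Longrightarrow>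
        card (color_class V (fst cx) (snd cx)) \<le> card (color_class V (fst y) (snd y))"
      using ex_has_least_nat[of P "(c0,x0)" "\<lambda>(c,x). card (color_class V c x)"]
      by (auto simp: case_prod_beta)
    obtain c x where cx: "cx = (c, x)" by fastforce
    have pc: "proper_coloring V E c" and cn: "card (c ` V) = n" and xV: "x \<in> c ` V"
      using Pcx cx unfolding P_def by auto
    have min: "\<And>c' x'. P (c', x') \<Longrightarrow> card (color_class V c x) \<le> card (color_class V c' x')"
      using cxmin cx by fastforce
    have join: "\<And>a b. a \<in> c ` V \<Longrightarrow> b \<in> c ` V \<Longrightarrow> a \<noteq> b \<Longrightarrow>
        \<exists>u\<in>V. \<exists>v\<in>V. {u,v} \<in> E \<and> c u = a \<and> c v = b"
    proof (rule ccontr)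
      fix a b assume "a \<in> c ` V" "b \<in> c ` V" "a \<noteq> b"
        "\<not> (\<exists>u\<in>V. \<exists>v\<in>V. {u,v} \<in> E \<and> c u = a \<and> c v = b)"
      from merge_colors[OF fin pc this] obtain c' where
        "proper_coloring V E c'" "card (c' ` V) < card (c ` V)" by blast
      then show False using nmin cn by fastforce
    qed
    define T where "T = {B. B \<subseteq> c ` V \<and> card B = 2}"
    define g where "g = (\<lambda>e. c ` e)"
    have gE: "g ` E \<subseteq> T"
    proof
      fix S assume "S \<in> g ` E"
      then obtain e where e: "e \<in> E" "S = c ` e" unfolding g_def by auto
      then obtain u v where uv: "e = {u,v}" "u \<noteq> v" using Esub card_2_iff by metis
      have "u \<in> V" "v \<in> V" using Esub e uv by auto
      then have "c u \<noteq> c v" using pc e uv unfolding proper_coloring_def by auto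
      then show "S \<in> T" unfolding T_def using e uv \<open>u \<in> V\<close> \<open>v \<in> V\<close> by auto
    qed
    have Tg: "T \<subseteq> g ` E"
    proof
      fix S assume "S \<in> T"
      then obtain a b where ab: "S = {a,b}" "a \<noteq> b" "a \<in> c ` V" "b \<in> c ` V"
        unfolding T_def by (auto simp: card_2_iff)
      then obtain u v where "u \<in> V" "v \<in> V" "{u,v} \<in> E" "c u = a" "c v = b"
        using join by blast
      then have "S = g {u,v}" unfolding g_def using ab by auto
      then show "S \<in> g ` E" using \<open>{u,v} \<in> E\<close> by blast
    qed
    have gT: "g ` E = T" using gE Tg by blast
    have cardT: "card T = n choose 2" unfolding T_def using n_subsets[of "c ` V" 2] fin cn by auto
    have "card T \<le> card E" using gT finE card_image_le by metis
    then have "2 * (n choose 2) \<le> k * (k + 1)" using assms(3) cardT by linarith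
    moreover have "2 * (n choose 2) = n * (n - 1)"
    proof -
      have "even (n * (n - 1))" by (cases "even n") auto
      then show ?thesis by (simp add: choose_two)
    qed
    ultimately have nn: "n * (n - 1) \<le> k * (k + 1)" by simp
    have nk: "n = k + 1"
    proof (rule ccontr)
      assume "n \<noteq> k + 1"
      then have "n \<ge> k + 2" using False by simp
      then have "(k+2) * (k+1) \<le> n * (n - 1)" by (intro mult_mono) auto
      then show False using nn by simp
    qed
    have "card E \<le> card T" using assms(3) cardT nn
      \<open>2 * (n choose 2) = n * (n - 1)\<close> nk by simp
    then have "card (g ` E) = card E" using gT card_image_le[OF finE, of g] by simp
    then have injg: "inj_on g E" using eq_card_imp_inj_on finE by blast
    have kc: "k_coloring (k + 1) V E c" using pc cn nk unfolding k_coloring_def by simp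
    have single: "card (color_class V c x) = 1"
    proof (rule ccontr)
      assume ne1: "card (color_class V c x) \<noteq> 1"
      have finC: "finite (color_class V c x)" using fin unfolding color_class_def by simp
      have "color_class V c x \<noteq> {}" using xV unfolding color_class_def by auto
      then have "card (color_class V c x) > 0" using finC by (simp add: card_gt_0_iff)
      then have c2: "card (color_class V c x) \<ge> 2" using ne1 by linarith
      obtain w1 where w1C: "w1 \<in> color_class V c x" using \<open>color_class V c x \<noteq> {}\<close> by blast
      obtain w2 where "w2 \<in> color_class V c x" "w2 \<noteq> w1"
        using other_elem[OF finC c2 w1C] by blast
      then have w: "w1 \<in> color_class V c x" "w2 \<in> color_class V c x" "w1 \<noteq> w2"
        using w1C by auto
      have w1: "w1 \<in> V" "c w1 = x" and w2: "w2 \<in> V" "c w2 = x" using w unfolding color_class_def by auto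
      have "card (c ` V) \<ge> 2" using cn nk assms(1) by simp
      then obtain y where yV: "y \<in> c ` V" and xy: "y \<noteq> x"
        using other_elem[of "c ` V" x] fin xV by blast
      have "\<exists>w\<in>{w1,w2}. \<forall>u\<in>V. {w,u} \<in> E \<longrightarrow> c u \<noteq> y"
      proof (rule ccontr)
        assume "\<not> ?thesis"
        then obtain u1 u2 where u: "u1 \<in> V" "{w1,u1} \<in> E" "c u1 = y" "u2 \<in> V" "{w2,u2} \<in> E" "c u2 = y"
          by blast
        have "g {w1,u1} = {x,y}" "g {w2,u2} = {x,y}" unfolding g_def using u w1 w2 by auto
        then have "{w1,u1} = {w2,u2}" using injg u inj_on_eq_iff by metis
        then show False using w(3) u w1 w2 xy by (auto simp: doubleton_eq_iff)
      qed
      then obtain w where wW: "w \<in> {w1,w2}" and nb: "\<forall>u\<in>V. {w,u} \<in> E \<longrightarrow> c u \<noteq> y" by blast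
      obtain w' where w'W: "w' \<in> {w1,w2}" "w' \<noteq> w" using w(3) wW by auto
      have wV: "w \<in> V" "c w = x" and w'V: "w' \<in> V" "c w' = x" using wW w'W w1 w2 by auto
      define c' where "c' = c(w := y)"
      have pc': "proper_coloring V E c'"
        unfolding proper_coloring_def
      proof (intro ballI impI)
        fix u v assume uv: "u \<in> V" "v \<in> V" "{u, v} \<in> E"
        have e2: "{v, u} \<in> E" using uv(3) by (simp add: insert_commute)
        have "u \<noteq> v" using Esub[OF uv(3)] by (metis card_2_iff doubleton_eq_iff insert_absorb2)
        then show "c' u \<noteq> c' v" using pc uv e2 nb unfolding proper_coloring_def c'_def
          by (auto simp: fun_upd_def)
      qed
      have img: "c' ` V = c ` V"
      proof
        show "c' ` V \<subseteq> c ` V" using yV unfolding c'_def by auto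
        show "c ` V \<subseteq> c' ` V"
        proof
          fix z assume "z \<in> c ` V"
          then obtain v where v: "v \<in> V" "z = c v" by auto
          show "z \<in> c' ` V"
          proof (cases "v = w")
            case True
            then have "c' w' = z" using v wV w'V w'W unfolding c'_def by auto
            then show ?thesis using w'V by auto
          next
            case False
            then show ?thesis using v unfolding c'_def by (auto intro!: image_eqI[of _ _ v])
          qed
        qed
      qed
      have "x \<in> c' ` V" using img xV by simp
      then have "P (c', x)" using pc' img cn unfolding P_def by simp
      then have le: "card (color_class V c x) \<le> card (color_class V c' x)" using min by blast
      have "color_class V c' x = color_class V c x - {w}"
        unfolding color_class_def c'_def using xy by auto
      moreover have "w \<in> color_class V c x" using wV unfolding color_class_def by auto
      ultimately have "card (color_class V c' x) < card (color_class V c x)"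
        using finC by (metis card_Diff1_less)
      then show False using le by simp
    qed
    show ?thesis unfolding almost_k_coloring_def using kc single xV by blast
  qed
qed

end
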